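(* Let $P\subset\mathbb R^n$ be a bounded open convex set and $\mu$ Lebesgue measure. Then there exists a convex function $\phi\in L^1(P)$ with $\int_P\phi\,d\mu=0$ and $\inf_P\phi=-1$ (in particular $\phi\not\equiv 0$) such that $$-\frac{2}{n+1}\left(\frac{n}{n+1}\right)^n\inf_P\phi=\frac{1}{\mu(P)}\int_P|\phi|\,d\mu .$$
   Context: For every convex $\phi\in L^1(P)$ with $\int_P\phi\,d\mu=0$ one has $-\frac{2}{n+1}\left(\frac{n}{n+1}\right)^n\inf_P\phi\le\frac{1}{\mu(P)}\int_P|\phi|\,d\mu\le -2\inf_P\phi$; the claim asserts that the first of these inequalities is attained by a nonzero function. *)

theory Defs
  imports "HOL-Analysis.Analysis"
begin

end

theory Submission
  imports Defs "HOL-Analysis.Analysis"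
begin

definition gf :: "'a::real_normed_vector set \<Rightarrow> 'a \<Rightarrow> 'a \<Rightarrow> real" where
  "gf P x0 x = Inf {t. 0 < t \<and> x0 + (1/t) *\<^sub>R (x - x0) \<in> P}"

lemma gf_ne:
  fixes x0 :: "'a::real_normed_vector"
  assumes "open P" "x0 \<in> P"
  shows "\<exists>t>0. x0 + (1/t) *\<^sub>R (x - x0) \<in> P"
proof -
  obtain r where r: "r > 0" "ball x0 r \<subseteq> P" using assms open_contains_ball by blast
  define t where "t = (norm (x - x0) + 1) / r"
  have "norm (x - x0) + 1 > 0" by (smt (verit) norm_ge_zero)
  then have t: "t > 0" unfolding t_def using r by (intro divide_pos_pos)
  have "norm ((1/t) *\<^sub>R (x - x0)) = norm (x - x0) / t" using t by simp
  also have "\<dots> = r * norm (x - x0) / (norm (x - x0) + 1)"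
    using r by (simp add: t_def field_simps)
  also have "\<dots> < r" using r \<open>norm (x - x0) + 1 > 0\<close>
    by (simp add: divide_less_eq)
  finally have "x0 + (1/t) *\<^sub>R (x - x0) \<in> ball x0 r" by (simp add: dist_norm)
  then show ?thesis using r t by blast
qed

lemma gf_up:
  fixes x0 :: "'a::real_normed_vector"
  assumes "convex P" "x0 \<in> P" "0 < t" "t \<le> t'" "x0 + (1/t) *\<^sub>R (x - x0) \<in> P"
  shows "x0 + (1/t') *\<^sub>R (x - x0) \<in> P"
proof -
  have t': "t' > 0" using assms by linarith
  define u where "u = t / t'"
  have u: "0 \<le> u" "u \<le> 1" using assms t' by (auto simp: u_def divide_le_eq)
  have "(1 - u) *\<^sub>R x0 + u *\<^sub>R (x0 + (1/t) *\<^sub>R (x - x0)) \<in> P"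
    using convexD[OF assms(1) assms(2) assms(5), of "1-u" u] u by simp
  moreover have "(1 - u) *\<^sub>R x0 + u *\<^sub>R (x0 + (1/t) *\<^sub>R (x - x0)) = x0 + (1/t') *\<^sub>R (x - x0)"
    using assms(3) t' by (simp add: u_def algebra_simps)
  ultimately show ?thesis by simp
qed

lemma gf_open:
  fixes x0 :: "'a::real_normed_vector"
  assumes "open P" "0 < t" "x0 + (1/t) *\<^sub>R (x - x0) \<in> P"
  shows "\<exists>t'. 0 < t' \<and> t' < t \<and> x0 + (1/t') *\<^sub>R (x - x0) \<in> P"
proof -
  let ?f = "\<lambda>s. x0 + (1/s) *\<^sub>R (x - x0)"
  have "isCont ?f t" using assms(2) by (intro continuous_intros) (auto simp: divide_inverse)
  then have "\<forall>\<^sub>F s in at t. ?f s \<in> P"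
    using assms unfolding isCont_def by (simp add: topological_tendstoD)
  then obtain d where d: "d > 0" "\<And>s. s \<noteq> t \<Longrightarrow> dist s t < d \<Longrightarrow> ?f s \<in> P"
    unfolding eventually_at by auto
  define s where "s = t - min d t / 2"
  have "s \<noteq> t" "dist s t < d" "0 < s" "s < t" using d assms(2) by (auto simp: s_def dist_real_def)
  then show ?thesis using d by blast
qed

lemma gf_less:
  assumes "open P" "convex P" "x0 \<in> P" "0 < t"
  shows "gf P x0 x < t \<longleftrightarrow> x0 + (1/t) *\<^sub>R (x - x0) \<in> P"
proof
  let ?S = "{t. 0 < t \<and> x0 + (1/t) *\<^sub>R (x - x0) \<in> P}"
  assume "gf P x0 x < t"
  then obtain s where "s \<in> ?S" "s < t"
    using gf_ne[OF assms(1,3), of x] unfolding gf_def by (metis (mono_tags) cInf_lessD empty_iff mem_Collect_eq)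
  then show "x0 + (1/t) *\<^sub>R (x - x0) \<in> P" using gf_up[OF assms(2,3)] by auto
next
  let ?S = "{t. 0 < t \<and> x0 + (1/t) *\<^sub>R (x - x0) \<in> P}"
  assume "x0 + (1/t) *\<^sub>R (x - x0) \<in> P"
  then obtain s where s: "0 < s" "s < t" "x0 + (1/s) *\<^sub>R (x - x0) \<in> P"
    using gf_open[OF assms(1,4)] by blast
  have "bdd_below ?S" by (rule bdd_belowI[of _ 0]) auto
  then have "Inf ?S \<le> s" using s by (intro cInf_lower) auto
  then show "gf P x0 x < t" using s unfolding gf_def by linarith
qed

lemma gf_nonneg:
  assumes "open P" "x0 \<in> P"
  shows "0 \<le> gf P x0 x"
  unfolding gf_def using gf_ne[OF assms, of x]
  by (intro cInf_greatest) auto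

lemma gf_center:
  assumes "open P" "convex P" "x0 \<in> P"
  shows "gf P x0 x0 = 0"
proof -
  have "gf P x0 x0 < t" if "t > 0" for t using gf_less[OF assms that] assms(3) by simp
  then have "gf P x0 x0 \<le> 0"
    by (metis less_irrefl not_le)
  with gf_nonneg[OF assms(1,3), of x0] show ?thesis by simp
qed

lemma gf_convex:
  assumes "open P" "convex P" "x0 \<in> P"
  shows "convex_on UNIV (gf P x0)"
proof (rule convex_onI)
  fix x y :: 'a and u :: real
  assume u: "0 < u" "u < 1"
  let ?g = "gf P x0"
  show "?g ((1 - u) *\<^sub>R x + u *\<^sub>R y) \<le> (1 - u) * ?g x + u * ?g y"
  proof (rule field_le_epsilon)
    fix e :: real assume e: "e > 0"
    define tx where "tx = ?g x + e"
    define ty where "ty = ?g y + e"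
    have tx: "tx > 0" "?g x < tx" using e gf_nonneg[OF assms(1,3), of x] by (auto simp: tx_def)
    have ty: "ty > 0" "?g y < ty" using e gf_nonneg[OF assms(1,3), of y] by (auto simp: ty_def)
    define p where "p = x0 + (1/tx) *\<^sub>R (x - x0)"
    define q where "q = x0 + (1/ty) *\<^sub>R (y - x0)"
    have p: "p \<in> P" using gf_less[OF assms tx(1)] tx(2) by (simp add: p_def)
    have q: "q \<in> P" using gf_less[OF assms ty(1)] ty(2) by (simp add: q_def)
    define T where "T = (1 - u) * tx + u * ty"
    have T: "T > 0" using u tx ty by (simp add: T_def add_pos_pos)
    define a where "a = (1 - u) * tx / T"
    define b where "b = u * ty / T"
    have "a + b = ((1 - u) * tx + u * ty) / T" by (simp add: a_def b_def add_divide_distrib)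
    then have ab: "0 \<le> a" "0 \<le> b" "a + b = 1" using u tx ty T
      by (auto simp: a_def b_def T_def)
    have "a *\<^sub>R p + b *\<^sub>R q \<in> P" using convexD[OF assms(2) p q ab] .
    moreover have "a *\<^sub>R p + b *\<^sub>R q = x0 + (1/T) *\<^sub>R (((1 - u) *\<^sub>R x + u *\<^sub>R y) - x0)"
    proof -
      have "a *\<^sub>R p + b *\<^sub>R q = (a + b) *\<^sub>R x0 + (a / tx) *\<^sub>R (x - x0) + (b / ty) *\<^sub>R (y - x0)"
        by (simp add: p_def q_def algebra_simps)
      also have "\<dots> = x0 + ((1 - u) / T) *\<^sub>R (x - x0) + (u / T) *\<^sub>R (y - x0)"
        using ab tx ty by (simp add: a_def b_def)
      also have "\<dots> = x0 + (1/T) *\<^sub>R ((1 - u) *\<^sub>R (x - x0) + u *\<^sub>R (y - x0))"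
        by (simp only: scaleR_add_right scaleR_scaleR) (simp add: add.assoc)
      also have "(1 - u) *\<^sub>R (x - x0) + u *\<^sub>R (y - x0) = ((1 - u) *\<^sub>R x + u *\<^sub>R y) - x0"
        by (simp add: algebra_simps)
      finally show ?thesis .
    qed
    ultimately have "?g ((1 - u) *\<^sub>R x + u *\<^sub>R y) < T"
      using gf_less[OF assms T] by simp
    also have "T = (1 - u) * ?g x + u * ?g y + e" using u by (simp add: T_def tx_def ty_def algebra_simps)
    finally show "?g ((1 - u) *\<^sub>R x + u *\<^sub>R y) \<le> (1 - u) * ?g x + u * ?g y + e" by simp
  qed
qed simp


lemma measure_eqI_Iio:
  fixes M N :: "real measure"
  assumes sets: "sets M = sets borel" "sets N = sets borel"
  assumes fin: "\<And>x. emeasure M {..<x} < \<infinity>"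
  assumes eq: "\<And>x. emeasure M {..<x} = emeasure N {..<x}"
  shows "M = N"
proof (rule measure_eqI_generator_eq_countable)
  let ?LT = "\<lambda>a::real. {..<a}" let ?E = "range ?LT"
  have "{..<a} \<inter> {..<b} = {..<min a b}" for a b :: real by auto
  then show "Int_stable ?E"
    by (auto simp: Int_stable_def)
  show "?E \<subseteq> Pow UNIV" "sets M = sigma_sets UNIV ?E" "sets N = sigma_sets UNIV ?E"
    unfolding sets borel_Iio by auto
  show "?LT`Rats \<subseteq> ?E" by auto
  show "(\<Union>i\<in>Rats. ?LT i) = UNIV"
  proof -
    have "\<exists>q\<in>\<rat>. x < q" for x :: real
      using Rats_dense_in_real[of x "x+1"] by auto
    then show ?thesis by auto
  qed
  show "\<And>a. a \<in> ?LT`Rats \<Longrightarrow> emeasure M a \<noteq> \<infinity>"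
    using fin by (auto simp: less_top)
qed (auto intro: eq countable_rat)

lemma gf_cont:
  fixes P :: "(real^'n) set"
  assumes "open P" "convex P" "x0 \<in> P"
  shows "continuous_on UNIV (gf P x0)"
  using convex_on_continuous[OF open_UNIV gf_convex[OF assms]] .

lemma gf_sub_measure:
  fixes P :: "(real^'n) set"
  assumes "open P" "convex P" "x0 \<in> P" "0 < s"
  shows "emeasure lborel {x. gf P x0 x < s} = ennreal (s ^ CARD('n)) * emeasure lborel P"
proof -
  define T where "T = (\<lambda>y::real^'n. (x0 - s *\<^sub>R x0) + s *\<^sub>R y)"
  define B where "B = {x. gf P x0 x < s}"
  have eq: "lborel = density (distr lborel borel T) (\<lambda>_. \<bar>s\<bar> ^ DIM(real^'n))"
    unfolding T_def using assms(4) by (intro lborel_affine) simp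
  have Bo: "open B" unfolding B_def
    by (intro open_Collect_less gf_cont[OF assms(1-3)] continuous_on_const)
  then have Bs[measurable]: "B \<in> sets borel" by simp
  have Tm[measurable]: "T \<in> borel_measurable borel" unfolding T_def
    by (intro borel_measurable_continuous_onI continuous_intros)
  have pre: "T -` B = P"
  proof -
    have "x0 + (1/s) *\<^sub>R (T y - x0) = y" for y
    proof -
      have "T y - x0 = s *\<^sub>R (y - x0)" by (simp add: T_def algebra_simps)
      then show ?thesis using assms(4) by simp
    qed
    then show ?thesis unfolding B_def using gf_less[OF assms] by auto
  qed
  have "emeasure lborel B = emeasure (density (distr lborel borel T) (\<lambda>_. \<bar>s\<bar> ^ DIM(real^'n))) B"
    by (subst eq) (rule refl)
  also have "\<dots> = (\<integral>\<^sup>+ x. ennreal (\<bar>s\<bar> ^ DIM(real^'n)) * indicator B x \<partial>distr lborel borel T)"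
    by (subst emeasure_density) auto
  also have "\<dots> = ennreal (\<bar>s\<bar> ^ DIM(real^'n)) * emeasure (distr lborel borel T) B"
    by (rule nn_integral_cmult_indicator) simp
  also have "\<dots> = ennreal (s ^ CARD('n)) * emeasure lborel P"
    using assms(4) by (simp add: emeasure_distr pre)
  finally show ?thesis unfolding B_def .
qed


lemma ftc_pow:
  assumes "0 \<le> m" "1 \<le> n"
  shows "has_bochner_integral lborel (\<lambda>x. c * real n * x^(n-1) * indicator {0..m} x) (c * m^n)"
proof -
  have "has_bochner_integral lborel (\<lambda>x. c * real n * x^(n-1) * indicator {0..m} x) (c * m^n - c * 0^n)"
  proof (rule has_bochner_integral_FTC_Icc_real[where F="\<lambda>x. c * x^n"])
    fix x :: real
    show "DERIV (\<lambda>x. c * x^n) x :> c * real n * x^(n-1)"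
      by (auto intro!: derivative_eq_intros)
    show "isCont (\<lambda>x. c * real n * x^(n-1)) x" by (intro continuous_intros)
  qed (use assms in auto)
  then show ?thesis using assms by (simp add: power_0_left)
qed

lemma gf_distr:
  fixes P :: "(real^'n) set"
  assumes "open P" "convex P" "bounded P" "x0 \<in> P"
  shows "distr (density lborel (\<lambda>x. ennreal (indicator P x))) borel (gf P x0)
       = density lborel (\<lambda>s. ennreal (measure lborel P * real CARD('n) * s^(CARD('n)-1) * indicator {0..1} s))"
    (is "?L = ?R")
proof (rule measure_eqI_Iio)
  let ?g = "gf P x0"
  let ?c = "measure lborel P"
  let ?n = "CARD('n)"
  have n1: "1 \<le> ?n" by (simp add: Suc_leI)
  have gm[measurable]: "?g \<in> borel_measurable borel"
    by (rule borel_measurable_continuous_onI gf_cont[OF assms(1,2,4)])+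
  have Pb[measurable]: "P \<in> sets borel" using assms(1) by simp
  have fin: "emeasure lborel P < \<infinity>" using emeasure_bounded_finite[OF assms(3)] .
  have cP: "emeasure lborel P = ennreal ?c" using fin by (simp add: emeasure_eq_ennreal_measure)
  have gv[measurable]: "?g -` {..<t} \<in> sets borel" for t
    using measurable_sets[OF gm, of "{..<t}"] by simp
  have L: "emeasure ?L {..<t} = emeasure lborel (P \<inter> {x. ?g x < t})" for t
  proof -
    have "emeasure ?L {..<t} = emeasure (density lborel (\<lambda>x. ennreal (indicator P x))) (?g -` {..<t})"
      by (subst emeasure_distr) auto
    also have "\<dots> = (\<integral>\<^sup>+ x. ennreal (indicator P x) * indicator (?g -` {..<t}) x \<partial>lborel)"
      by (subst emeasure_density) auto
    also have "\<dots> = (\<integral>\<^sup>+ x. indicator (P \<inter> {x. ?g x < t}) x \<partial>lborel)"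
      by (intro nn_integral_cong) (auto split: split_indicator)
    also have "\<dots> = emeasure lborel (P \<inter> {x. ?g x < t})"
      by (intro nn_integral_indicator) measurable
    finally show ?thesis .
  qed
  show "emeasure ?L {..<t} < \<infinity>" for t
  proof -
    have "emeasure lborel (P \<inter> {x. ?g x < t}) \<le> emeasure lborel P"
      by (rule emeasure_mono) auto
    then show ?thesis unfolding L using fin by (rule le_less_trans)
  qed
  show "emeasure ?L {..<t} = emeasure ?R {..<t}" for t
  proof -
    have R: "emeasure ?R {..<t} = (\<integral>\<^sup>+ s. ennreal (?c * ?n * s^(?n-1) * indicator {0..1} s) * indicator {..<t} s \<partial>lborel)"
      by (subst emeasure_density) auto
    show ?thesis
    proof (cases "t \<le> 0")
      case True
      have "P \<inter> {x. ?g x < t} = {}" using True gf_nonneg[OF assms(1,4)] by (smt (verit) disjoint_iff mem_Collect_eq)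
      moreover have "(\<integral>\<^sup>+ s. ennreal (?c * ?n * s^(?n-1) * indicator {0..1} s) * indicator {..<t} s \<partial>lborel) = 0"
        using True by (subst nn_integral_cong[where v="\<lambda>_. 0"]) (auto split: split_indicator)
      ultimately show ?thesis unfolding L R by simp
    next
      case False
      define m where "m = min t 1"
      have m: "0 \<le> m" using False by (simp add: m_def)
      have hb: "has_bochner_integral lborel (\<lambda>x. ?c * real ?n * x^(?n-1) * indicator {0..m} x) (?c * m^?n)"
        by (rule ftc_pow[OF m n1])
      have "(\<integral>\<^sup>+ s. ennreal (?c * ?n * s^(?n-1) * indicator {0..1} s) * indicator {..<t} s \<partial>lborel)
          = (\<integral>\<^sup>+ s. ennreal (?c * real ?n * s^(?n-1) * indicator {0..m} s) \<partial>lborel)"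
      proof (rule nn_integral_cong_AE)
        show "AE s in lborel. ennreal (?c * ?n * s^(?n-1) * indicator {0..1} s) * indicator {..<t} s
              = ennreal (?c * real ?n * s^(?n-1) * indicator {0..m} s)"
          using AE_lborel_singleton[of t]
          by eventually_elim (auto simp: m_def split: split_indicator)
      qed
      also have "\<dots> = ennreal (?c * m^?n)"
      proof -
        have int: "integrable lborel (\<lambda>x. ?c * real ?n * x^(?n-1) * indicator {0..m} x)"
          using hb by (rule integrable.intros)
        have ieq: "integral\<^sup>L lborel (\<lambda>x. ?c * real ?n * x^(?n-1) * indicator {0..m} x) = ?c * m^?n"
          using hb by (rule has_bochner_integral_integral_eq)
        have "AE x in lborel. 0 \<le> ?c * real ?n * x^(?n-1) * indicator {0..m} x"
          using measure_nonneg[of lborel P] by (auto split: split_indicator)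
        then show ?thesis using nn_integral_eq_integral[OF int] ieq by simp
      qed
      finally have Rv: "emeasure ?R {..<t} = ennreal (?c * m^?n)" unfolding R .
      show ?thesis
      proof (cases "t \<le> 1")
        case True
        have "P \<inter> {x. ?g x < t} = {x. ?g x < t}"
          using gf_less[OF assms(1,2,4), of 1] True by force
        then show ?thesis unfolding L Rv using gf_sub_measure[OF assms(1,2,4), of t] False True
          by (simp add: m_def cP ennreal_mult' mult.commute)
      next
        case f2: False
        have "P \<inter> {x. ?g x < t} = P"
          using gf_less[OF assms(1,2,4), of 1] f2 by force
        then show ?thesis unfolding L Rv using f2 by (simp add: m_def cP)
      qed
    qed
  qed
qed auto


lemma transfer_int:
  fixes P :: "(real^'n) set" and h :: "real \<Rightarrow> real"
  assumes "open P" "convex P" "bounded P" "x0 \<in> P"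
    and hm[measurable]: "h \<in> borel_measurable borel"
  shows "integral\<^sup>L lborel (\<lambda>x. indicator P x *\<^sub>R h (gf P x0 x))
       = integral\<^sup>L lborel (\<lambda>s. (measure lborel P * real CARD('n) * s^(CARD('n)-1) * indicator {0..1} s) *\<^sub>R h s)"
proof -
  let ?g = "gf P x0"
  have gm[measurable]: "?g \<in> borel_measurable borel"
    by (rule borel_measurable_continuous_onI gf_cont[OF assms(1,2,4)])+
  have Pb[measurable]: "P \<in> sets borel" using assms(1) by simp
  let ?Q = "density lborel (\<lambda>x. ennreal (indicator P x))"
  have "integral\<^sup>L lborel (\<lambda>x. indicator P x *\<^sub>R h (?g x)) = integral\<^sup>L ?Q (\<lambda>x. h (?g x))"
    by (subst integral_density) auto
  also have "\<dots> = integral\<^sup>L (distr ?Q borel ?g) h"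
    by (subst integral_distr) auto
  also have "\<dots> = integral\<^sup>L (density lborel (\<lambda>s. ennreal (measure lborel P * real CARD('n) * s^(CARD('n)-1) * indicator {0..1} s))) h"
    by (subst gf_distr[OF assms(1-4)]) (rule refl)
  also have "\<dots> = integral\<^sup>L lborel (\<lambda>s. (measure lborel P * real CARD('n) * s^(CARD('n)-1) * indicator {0..1} s) *\<^sub>R h s)"
    using measure_nonneg[of lborel P] by (subst integral_density) (auto split: split_indicator)
  finally show ?thesis .
qed

theorem theorem1p2:
  fixes P :: "(real ^ 'n) set"
  assumes "open P" and "bounded P" and "convex P" and "P \<noteq> {}"
  shows "\<exists>\<phi> :: real ^ 'n \<Rightarrow> real.
           convex_on P \<phi> \<and>
           set_integrable lebesgue P \<phi> \<and>
           (LINT x:P|lebesgue. \<phi> x) = 0 \<and>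
           (INF x\<in>P. \<phi> x) = -1 \<and>
           - (2 / (real CARD('n) + 1)) * (real CARD('n) / (real CARD('n) + 1)) ^ CARD('n)
               * (INF x\<in>P. \<phi> x)
             = (1 / measure lebesgue P) * (LINT x:P|lebesgue. \<bar>\<phi> x\<bar>)"
proof -
  obtain x0 where x0: "x0 \<in> P" using assms(4) by blast
  note A = assms(1) assms(3) assms(2) x0
  define g where "g = gf P x0"
  define n where "n = CARD('n)"
  obtain m where nm: "n = Suc m" unfolding n_def using not0_implies_Suc by fastforce
  define c where "c = measure lborel P"
  define a :: real where "a = (real n + 1) / real n"
  define \<phi> where "\<phi> = (\<lambda>x. a * g x - 1)"
  have an: "a * real n = real n + 1" using nm by (simp add: a_def)
  have apos: "0 < a" using nm by (simp add: a_def)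
  have gm[measurable]: "g \<in> borel_measurable borel" unfolding g_def
    by (rule borel_measurable_continuous_onI gf_cont[OF A(1,2,4)])+
  have Pb[measurable]: "P \<in> sets borel" using assms(1) by simp
  have gcont: "continuous_on UNIV g" unfolding g_def using gf_cont[OF A(1,2,4)] .
  have gconv: "convex_on UNIV g" unfolding g_def using gf_convex[OF A(1,2,4)] .
  have gnn: "0 \<le> g x" for x unfolding g_def using gf_nonneg[OF assms(1) x0] .
  have g0: "g x0 = 0" unfolding g_def using gf_center[OF A(1,2,4)] .
  have conv: "convex_on P \<phi>"
  proof -
    have "convex_on P g" using convex_on_subset[OF gconv _ assms(3)] by simp
    then have "convex_on P (\<lambda>x. a * g x)" using apos by (intro convex_on_cmul) auto
    moreover have "convex_on P (\<lambda>x. - 1)" using assms(3) by (simp add: convex_on_const)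
    ultimately have "convex_on P (\<lambda>x. a * g x + - 1)" by (rule convex_on_add)
    then show ?thesis by (simp add: \<phi>_def)
  qed
  have phim[measurable]: "\<phi> \<in> borel_measurable borel" unfolding \<phi>_def by measurable
  have cphi: "continuous_on UNIV \<phi>" unfolding \<phi>_def by (intro continuous_intros gcont)
  have sint_b: "set_integrable lborel P \<phi>"
  proof (rule set_integrable_subset)
    show "set_integrable lborel (closure P) \<phi>"
      unfolding set_integrable_def
      using borel_integrable_compact[of "closure P" \<phi>] compact_closure[of P] assms(2)
        continuous_on_subset[OF cphi] by auto
  qed (auto simp: closure_subset)
  have sint: "set_integrable lebesgue P \<phi>"
    using sint_b unfolding set_integrable_def by (subst integrable_completion) auto
  have inf: "(INF x\<in>P. \<phi> x) = -1"
  proof (rule antisym)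
    have "bdd_below (\<phi> ` P)" using gnn apos
      by (intro bdd_belowI2[of _ "-1"]) (simp add: \<phi>_def)
    then have "(INF x\<in>P. \<phi> x) \<le> \<phi> x0" using x0 by (rule cINF_lower2) simp
    then show "(INF x\<in>P. \<phi> x) \<le> -1" by (simp add: \<phi>_def g0)
    show "-1 \<le> (INF x\<in>P. \<phi> x)" using assms(4) gnn apos
      by (intro cINF_greatest) (auto simp: \<phi>_def)
  qed
  have mP: "measure lebesgue P = c" unfolding c_def by simp
  have cpos: "0 < c"
  proof -
    obtain r where r: "r > 0" "ball x0 r \<subseteq> P" using assms(1) x0 open_contains_ball by blast
    have "P \<in> fmeasurable lborel" using emeasure_bounded_finite[OF assms(2)]
      by (simp add: fmeasurable_def)
    then have "measure lborel (ball x0 r) \<le> c" unfolding c_def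
      using r by (intro measure_mono_fmeasurable) auto
    moreover have "0 < measure lborel (ball x0 r)" using content_ball_pos[OF r(1)] by simp
    ultimately show ?thesis by linarith
  qed
  define kk where "kk = (\<lambda>s::real. c * real n * s^m * indicator {0..1} s)"
  have tr: "(LINT x:P|lebesgue. h (g x)) = integral\<^sup>L lborel (\<lambda>s. kk s * h s)"
    if [measurable]: "h \<in> borel_measurable borel" for h
  proof -
    have "(LINT x:P|lebesgue. h (g x)) = integral\<^sup>L lborel (\<lambda>x. indicator P x *\<^sub>R h (g x))"
      unfolding set_lebesgue_integral_def by (subst integral_completion) auto
    also have "\<dots> = integral\<^sup>L lborel (\<lambda>s. kk s * h s)"
      unfolding g_def kk_def c_def using transfer_int[OF A that] by (simp add: n_def[symmetric] nm)
    finally show ?thesis .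
  qed
  have I1: "has_bochner_integral lborel (\<lambda>s. kk s * (a * s - 1)) 0"
  proof -
    have "has_bochner_integral lborel (\<lambda>s. c * (real n * s^m * (a * s - 1)) * indicator {0..1} s)
           ((\<lambda>s. c * (s^(m+2) - s^(m+1))) 1 - (\<lambda>s. c * (s^(m+2) - s^(m+1))) 0)"
    proof (rule has_bochner_integral_FTC_Icc_real)
      fix x :: real
      have "DERIV (\<lambda>s. c * (s^(m+2) - s^(m+1))) x :> c * (real (m+2) * x^(m+2 - Suc 0) - real (m+1) * x^(m+1 - Suc 0))"
        by (intro DERIV_cmult DERIV_diff DERIV_pow)
      then have d: "DERIV (\<lambda>s. c * (s^(m+2) - s^(m+1))) x :> c * (real (m+2) * x^(m+1) - real (m+1) * x^m)"
        by simp
      have e: "c * (real (m+2) * x^(m+1) - real (m+1) * x^m) = c * (real n * x^m * (a * x - 1))"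
      proof -
        have "real n * x^m * (a * x - 1) = (a * real n) * x^(m+1) - real n * x^m" by (simp add: algebra_simps)
        also have "\<dots> = (real n + 1) * x^(m+1) - real n * x^m" by (simp only: an)
        finally show ?thesis using nm by (simp add: algebra_simps)
      qed
      show "DERIV (\<lambda>s. c * (s^(m+2) - s^(m+1))) x :> c * (real n * x^m * (a * x - 1))"
        using d unfolding e .
      show "isCont (\<lambda>s. c * (real n * s^m * (a * s - 1))) x" by (intro continuous_intros)
    qed simp
    then show ?thesis by (simp add: kk_def mult_ac)
  qed
  define s0 :: real where "s0 = real n / (real n + 1)"
  have s0: "0 \<le> s0" "s0 \<le> 1" "a * s0 = 1" using nm by (auto simp: s0_def a_def)
  have I2: "has_bochner_integral lborel (\<lambda>s. c * (real n * s^m * (1 - a * s)) * indicator {0..s0} s)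
           (c * (s0^n - s0^(n+1)))"
  proof -
    have "has_bochner_integral lborel (\<lambda>s. c * (real n * s^m * (1 - a * s)) * indicator {0..s0} s)
           ((\<lambda>s. c * (s^n - s^(n+1))) s0 - (\<lambda>s. c * (s^n - s^(n+1))) 0)"
    proof (rule has_bochner_integral_FTC_Icc_real)
      fix x :: real
      have "DERIV (\<lambda>s. c * (s^n - s^(n+1))) x :> c * (real n * x^(n - Suc 0) - real (n+1) * x^(n+1 - Suc 0))"
        by (intro DERIV_cmult DERIV_diff DERIV_pow)
      then have d: "DERIV (\<lambda>s. c * (s^n - s^(n+1))) x :> c * (real n * x^m - (real n + 1) * x^(m+1))"
        using nm by simp
      have e: "c * (real n * x^m - (real n + 1) * x^(m+1)) = c * (real n * x^m * (1 - a * x))"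
      proof -
        have "real n * x^m * (1 - a * x) = real n * x^m - (a * real n) * x^(m+1)" by (simp add: algebra_simps)
        also have "\<dots> = real n * x^m - (real n + 1) * x^(m+1)" by (simp only: an)
        finally show ?thesis by simp
      qed
      show "DERIV (\<lambda>s. c * (s^n - s^(n+1))) x :> c * (real n * x^m * (1 - a * x))"
        using d unfolding e .
      show "isCont (\<lambda>s. c * (real n * s^m * (1 - a * s))) x" by (intro continuous_intros)
    qed (use s0 in simp)
    then show ?thesis using nm by simp
  qed
  have I3: "has_bochner_integral lborel (\<lambda>s. kk s * \<bar>a * s - 1\<bar>) (2 * (c * (s0^n - s0^(n+1))))"
  proof -
    have "has_bochner_integral lborel
       (\<lambda>s. kk s * (a * s - 1) + 2 * (c * (real n * s^m * (1 - a * s)) * indicator {0..s0} s))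
       (0 + 2 * (c * (s0^n - s0^(n+1))))"
      using I1 I2 by (intro has_bochner_integral_add has_bochner_integral_mult_right)
    moreover have "kk s * (a * s - 1) + 2 * (c * (real n * s^m * (1 - a * s)) * indicator {0..s0} s)
        = kk s * \<bar>a * s - 1\<bar>" for s
    proof (cases "0 \<le> s \<and> s \<le> 1")
      case True
      show ?thesis
      proof (cases "s \<le> s0")
        case True
        then have "a * s \<le> 1" using s0 apos by (metis mult_left_mono less_imp_le)
        then show ?thesis using \<open>0 \<le> s \<and> s \<le> 1\<close> True
          by (simp add: kk_def abs_if algebra_simps)
      next
        case False
        then have "a * s > 1" using s0 apos by (metis mult_strict_left_mono not_le)
        then show ?thesis using \<open>0 \<le> s \<and> s \<le> 1\<close> False
          by (simp add: kk_def abs_if algebra_simps)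
      qed
    next
      case False
      then show ?thesis using s0 by (auto simp: kk_def)
    qed
    ultimately show ?thesis by simp
  qed
  have L1: "(LINT x:P|lebesgue. \<phi> x) = 0"
    using tr[of "\<lambda>s. a * s - 1"] has_bochner_integral_integral_eq[OF I1] by (simp add: \<phi>_def)
  have L2: "(LINT x:P|lebesgue. \<bar>\<phi> x\<bar>) = 2 * (c * (s0^n - s0^(n+1)))"
    using tr[of "\<lambda>s. \<bar>a * s - 1\<bar>"] has_bochner_integral_integral_eq[OF I3] by (simp add: \<phi>_def)
  have fin: "- (2 / (real CARD('n) + 1)) * (real CARD('n) / (real CARD('n) + 1)) ^ CARD('n) * (-1)
             = (1 / c) * (2 * (c * (s0^n - s0^(n+1))))"
  proof -
    have "(1 / c) * (2 * (c * (s0^n - s0^(n+1)))) = 2 * (s0^n * (1 - s0))"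
      using cpos by (simp add: algebra_simps)
    also have "1 - s0 = 1 / (real n + 1)" unfolding s0_def by (simp add: field_simps)
    finally show ?thesis by (simp add: s0_def n_def)
  qed
  show ?thesis
    by (rule exI[of _ \<phi>]) (use conv sint L1 inf L2 mP fin in simp)
qed
end
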